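(* Let $\Bbbk$ be a field of characteristic zero, $\lambda\in\Bbbk^*$ and $a\in\Bbbk$. If $\lambda\neq\pm1$ and $a\neq0$, then the $\mathcal O$-module $\Omega(\lambda,a)$ is irreducible.
   Context: $\mathcal O$ is the Lie algebra with basis $\mathcal O_n$ ($n\ge1$) and bracket $[\mathcal O_n,\mathcal O_m]=(n-m)\mathcal O_{n+m}-(n+m)\mathcal O_{n-m}$, where $\mathcal O_0=0$ and $\mathcal O_{-k}=-\mathcal O_k$ (it is the span of $L_n-L_{-n}$, $n\ge1$, in the Witt algebra). $\Omega(\lambda,a)$ is $\Bbbk[X]$ with action $\mathcal O_n\cdot f(X)=\lambda^n(X+na)f(X+n)-\lambda^{-n}(X-na)f(X-n)$ for $n\ge1$. *)

theory Defs
  imports "HOL-Computational_Algebra.Polynomial"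
begin

text \<open>The action of the basis element O_n (n >= 1) of the Lie algebra O on
  Omega(lam,a) = k[X]:
  O_n . f(X) = lam^n (X + n a) f(X + n) - lam^(-n) (X - n a) f(X - n).\<close>
definition omega_act :: "'a::field \<Rightarrow> 'a \<Rightarrow> nat \<Rightarrow> 'a poly \<Rightarrow> 'a poly" where
  "omega_act lam a n f =
     smult (lam ^ n) ([:of_nat n * a, 1:] * (f \<circ>\<^sub>p [:of_nat n, 1:]))
   - smult (inverse lam ^ n) ([:- (of_nat n * a), 1:] * (f \<circ>\<^sub>p [:- of_nat n, 1:]))"

text \<open>A submodule: a k-linear subspace of k[X] stable under all O_n, n >= 1
  (equivalently, under all of O, which is spanned by the O_n).\<close>
definition omega_submodule :: "'a::field \<Rightarrow> 'a \<Rightarrow> 'a poly set \<Rightarrow> bool" where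
  "omega_submodule lam a W \<longleftrightarrow>
     0 \<in> W \<and> (\<forall>f\<in>W. \<forall>g\<in>W. f + g \<in> W) \<and> (\<forall>c. \<forall>f\<in>W. smult c f \<in> W) \<and>
     (\<forall>n\<ge>1. \<forall>f\<in>W. omega_act lam a n f \<in> W)"

definition omega_irreducible :: "'a::field \<Rightarrow> 'a \<Rightarrow> bool" where
  "omega_irreducible lam a \<longleftrightarrow>
     (UNIV :: 'a poly set) \<noteq> {0} \<and>
     (\<forall>W. omega_submodule lam a W \<longrightarrow> W = {0} \<or> W = UNIV)"

end

theory Submission
  imports Defs
begin


lemma shift_coeffs:
  fixes p :: "'b::comm_ring_1 poly"
  shows "degree p \<le> Suc m \<Longrightarrow> coeff (p \<circ>\<^sub>p [:1,1:]) (Suc m) = coeff p (Suc m) \<and>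
     coeff (p \<circ>\<^sub>p [:1,1:]) m = coeff p m + of_nat (Suc m) * coeff p (Suc m)"
proof (induction p arbitrary: m)
  case 0
  then show ?case by simp
next
  case (pCons c q)
  have dq: "degree q \<le> m"
    using pCons.prems by (cases "q = 0") auto
  have comp: "pCons c q \<circ>\<^sub>p [:1,1:] = [:c:] + (q \<circ>\<^sub>p [:1,1:]) + pCons 0 (q \<circ>\<^sub>p [:1,1:])"
    by (simp add: pcompose_pCons algebra_simps)
  have z: "coeff (q \<circ>\<^sub>p [:1,1:]) (Suc m) = 0"
    using degree_pcompose_le[of q "[:1,1:]"] dq by (intro coeff_eq_0) simp
  show ?case
  proof (cases m)
    case 0
    then have "degree q = 0" using dq by simp
    then obtain b where qb: "q = [:b:]" by (metis degree_eq_zeroE)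
    show ?thesis using 0 qb by (simp add: pcompose_pCons algebra_simps)
  next
    case (Suc m')
    have IH: "coeff (q \<circ>\<^sub>p [:1,1:]) (Suc m') = coeff q (Suc m') \<and>
     coeff (q \<circ>\<^sub>p [:1,1:]) m' = coeff q m' + of_nat (Suc m') * coeff q (Suc m')"
      using pCons.IH[of m'] dq Suc by simp
    show ?thesis using IH z Suc by (simp add: comp algebra_simps)
  qed
qed

lemma shift_const:
  fixes p :: "'b::comm_ring_1 poly"
  shows "degree p = 0 \<Longrightarrow> p \<circ>\<^sub>p [:1,1:] = p"
  by (metis degree_eq_zeroE pcompose_const)

lemma deg_smult_leI: "degree p \<le> k \<Longrightarrow> degree (smult a p) \<le> k"
  using degree_smult_le order.trans by blast

definition Top :: "'a::field \<Rightarrow> 'a \<Rightarrow> 'a poly poly \<Rightarrow> 'a poly poly" where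
  "Top k m P = smult [:m:] (P \<circ>\<^sub>p [:1,1:]) - smult [:k:] P"

lemma Top_0 [simp]: "Top k m 0 = 0"
  by (simp add: Top_def)

lemma Top_pow_0 [simp]: "(Top k m ^^ j) 0 = 0"
  by (induction j) auto

lemma Top_pres:
  assumes "degree Q \<le> k"
  shows "degree (Top c m Q) \<le> k \<and> coeff (Top c m Q) k = smult (m - c) (coeff Q k)"
proof (cases k)
  case 0
  then have "Q \<circ>\<^sub>p [:1,1:] = Q" using assms shift_const by auto
  have "degree (Top c m Q) \<le> k" unfolding Top_def
    by (intro degree_diff_le deg_smult_leI) (simp_all add: \<open>Q \<circ>\<^sub>p [:1,1:] = Q\<close> assms)
  then show ?thesis using \<open>Q \<circ>\<^sub>p [:1,1:] = Q\<close>
    by (simp add: Top_def smult_diff_left)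
next
  case (Suc m')
  have "degree (Q \<circ>\<^sub>p [:1,1:]) \<le> k"
    using degree_pcompose_le[of Q "[:1,1:]"] assms by simp
  moreover have "coeff (Q \<circ>\<^sub>p [:1,1:]) k = coeff Q k" using shift_coeffs[of Q m'] assms Suc by simp
  moreover have "degree (Top c m Q) \<le> k" unfolding Top_def
    by (intro degree_diff_le deg_smult_leI) (simp_all add: calculation assms)
  ultimately show ?thesis
    by (simp add: Top_def smult_diff_left)
qed

lemma Top_drop:
  assumes "degree Q \<le> Suc k"
  shows "degree (Top m m Q) \<le> k \<and> coeff (Top m m Q) k = smult (m * of_nat (Suc k)) (coeff Q (Suc k))"
proof -
  have d: "degree (Q \<circ>\<^sub>p [:1,1:]) \<le> Suc k"
    using degree_pcompose_le[of Q "[:1,1:]"] assms by simp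
  have c: "coeff (Q \<circ>\<^sub>p [:1,1:]) (Suc k) = coeff Q (Suc k)"
     "coeff (Q \<circ>\<^sub>p [:1,1:]) k = coeff Q k + of_nat (Suc k) * coeff Q (Suc k)"
    using shift_coeffs[of Q k, OF assms] by simp_all
  have "degree (Top m m Q) \<le> Suc k"
    unfolding Top_def by (intro degree_diff_le deg_smult_leI) (simp_all add: d assms)
  moreover have "coeff (Top m m Q) (Suc k) = 0" using c(1) by (simp add: Top_def)
  ultimately have "degree (Top m m Q) \<le> k"
  proof -
    assume a1: "degree (Top m m Q) \<le> Suc k" and a2: "coeff (Top m m Q) (Suc k) = 0"
    show ?thesis
    proof (rule ccontr)
      assume "\<not> degree (Top m m Q) \<le> k"
      then have e: "degree (Top m m Q) = Suc k" using a1 by linarith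
      then have "lead_coeff (Top m m Q) = 0" using a2 by simp
      then have "Top m m Q = 0" by simp
      then show False using e by simp
    qed
  qed
  moreover have "coeff (Top m m Q) k = smult (m * of_nat (Suc k)) (coeff Q (Suc k))"
    using c(2) by (simp add: Top_def smult_add_right smult_add_left of_nat_poly algebra_simps)
  ultimately show ?thesis by blast
qed

lemma Top_kill0:
  assumes "degree Q = 0" shows "Top m m Q = 0"
  using shift_const[OF assms] by (simp add: Top_def)

lemma Top_kill: "degree P \<le> k \<Longrightarrow> (Top m m ^^ Suc k) P = 0"
proof (induction k arbitrary: P)
  case 0
  then show ?case using Top_kill0 by auto
next
  case (Suc k)
  have "degree (Top m m P) \<le> k" using Top_drop[OF Suc.prems] by blast
  then have "(Top m m ^^ Suc k) (Top m m P) = 0" using Suc.IH by blast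
  then show ?case by (simp only: funpow_Suc_right comp_def)
qed

lemma Top_pres_iter:
  assumes "degree Q \<le> k"
  shows "degree ((Top c m ^^ j) Q) \<le> k \<and> coeff ((Top c m ^^ j) Q) k = smult ((m - c) ^ j) (coeff Q k)"
proof (induction j)
  case 0
  then show ?case using assms by simp
next
  case (Suc j)
  then show ?case using Top_pres[of "(Top c m ^^ j) Q" k c m] by (simp add: mult.commute)
qed

lemma Top_drop_iter:
  fixes m :: "'a::field_char_0"
  assumes "degree Q \<le> k" "m \<noteq> 0"
  shows "j \<le> k \<Longrightarrow> degree ((Top m m ^^ j) Q) \<le> k - j \<and>
     (\<exists>c. c \<noteq> 0 \<and> coeff ((Top m m ^^ j) Q) (k - j) = smult c (coeff Q k))"
proof (induction j)
  case 0
  then show ?case using assms by (auto intro: exI[of _ 1])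
next
  case (Suc j)
  then obtain c where c: "c \<noteq> 0" "coeff ((Top m m ^^ j) Q) (k - j) = smult c (coeff Q k)"
    and d: "degree ((Top m m ^^ j) Q) \<le> Suc (k - Suc j)" by (auto simp: Suc_diff_Suc)
  have kj: "k - j = Suc (k - Suc j)" using Suc.prems by simp
  show ?case
  proof
    show "degree ((Top m m ^^ Suc j) Q) \<le> k - Suc j" using Top_drop[OF d, of m] by simp
    have "coeff ((Top m m ^^ Suc j) Q) (k - Suc j) = smult (m * of_nat (Suc (k - Suc j)) * c) (coeff Q k)"
      using Top_drop[OF d, of m] c(2) kj by simp
    moreover have "m * of_nat (Suc (k - Suc j)) * c \<noteq> 0"
      using assms(2) c(1) by (simp del: of_nat_Suc)
    ultimately show "\<exists>c. c \<noteq> 0 \<and> coeff ((Top m m ^^ Suc j) Q) (k - Suc j) = smult c (coeff Q k)"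
      by blast
  qed
qed



definition ev :: "'a::field poly poly \<Rightarrow> nat \<Rightarrow> 'a poly" where
  "ev P n = poly P [:of_nat n:]"
definition trm :: "'a::field \<Rightarrow> 'a poly poly \<Rightarrow> nat \<Rightarrow> 'a poly" where
  "trm u P n = smult (u ^ n) (ev P n)"

lemma ev_shift: "ev (P \<circ>\<^sub>p [:1,1:]) n = ev P (Suc n)"
proof -
  have "poly [:1, 1:] [:of_nat n:] = ([:of_nat (Suc n):] :: 'a poly)"
    by (simp add: one_pCons)
  then show ?thesis by (simp add: ev_def poly_pcompose)
qed

lemma ev_smult: "ev (smult c P) n = c * ev P n"
  by (simp add: ev_def)

lemma ev_diff: "ev (P - Q) n = ev P n - ev Q n"
  by (simp add: ev_def)

lemma const_mult: "[:c:] * p = smult c p"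
  by simp

lemma trm_step: "trm u P (Suc n) - smult k (trm u P n) = trm u (Top k u P) n"
  unfolding trm_def Top_def ev_diff ev_smult ev_shift const_mult
  by (simp add: algebra_simps smult_diff_right)

lemma sub_diff:
  assumes "omega_submodule lam a W" "f \<in> W" "g \<in> W"
  shows "f - g \<in> W"
proof -
  have "smult (-1) g \<in> W" using assms unfolding omega_submodule_def by blast
  then have "f + smult (-1) g \<in> W" using assms unfolding omega_submodule_def by blast
  then show ?thesis by simp
qed

lemma sub_smult:
  assumes "omega_submodule lam a W" "f \<in> W"
  shows "smult c f \<in> W"
  using assms unfolding omega_submodule_def by blast

lemma sub_iter:
  assumes W: "omega_submodule lam a W" and h: "\<And>n. trm u P n - trm v Q n \<in> W"
  shows "trm u ((Top k u ^^ j) P) n - trm v ((Top k v ^^ j) Q) n \<in> W"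
proof (induction j arbitrary: n)
  case 0
  then show ?case using h by simp
next
  case (Suc j)
  let ?P = "(Top k u ^^ j) P" and ?Q = "(Top k v ^^ j) Q"
  have "(trm u ?P (Suc n) - trm v ?Q (Suc n)) - smult k (trm u ?P n - trm v ?Q n) \<in> W"
    using Suc.IH W sub_diff sub_smult by blast
  moreover have "(trm u ?P (Suc n) - trm v ?Q (Suc n)) - smult k (trm u ?P n - trm v ?Q n)
     = trm u (Top k u ?P) n - trm v (Top k v ?Q) n"
    by (simp add: trm_step[symmetric] smult_diff_right algebra_simps)
  ultimately show ?case by simp
qed

definition Apol :: "'a::field \<Rightarrow> 'a poly \<Rightarrow> 'a poly poly" where
  "Apol a f = [:[:0,1:], [:a:]:] * (map_poly (\<lambda>c. [:c:]) f \<circ>\<^sub>p [:[:0,1:], 1:])"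
definition Bpol :: "'a::field \<Rightarrow> 'a poly \<Rightarrow> 'a poly poly" where
  "Bpol a f = [:[:0,1:], [:-a:]:] * (map_poly (\<lambda>c. [:c:]) f \<circ>\<^sub>p [:[:0,1:], -1:])"

lemma omega_trm:
  "omega_act lam a n f = trm lam (Apol a f) n - trm (inverse lam) (Bpol a f) n"
proof -
  have e1: "ev (Apol a f) n = [:of_nat n * a, 1:] * (f \<circ>\<^sub>p [:of_nat n, 1:])"
    by (simp add: ev_def Apol_def poly_pcompose pcompose_altdef[symmetric] one_pCons mult.commute)
  have e2: "ev (Bpol a f) n = [:- (of_nat n * a), 1:] * (f \<circ>\<^sub>p [:- of_nat n, 1:])"
    by (simp add: ev_def Bpol_def poly_pcompose pcompose_altdef[symmetric] one_pCons mult.commute)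
  show ?thesis by (simp add: omega_act_def trm_def e1 e2)
qed



lemma Cf_props:
  fixes f :: "'a::field poly"
  shows "degree (map_poly (\<lambda>c. [:c:]) f) = degree f"
    "lead_coeff (map_poly (\<lambda>c. [:c:]) f) = [:lead_coeff f:]"
proof -
  show "degree (map_poly (\<lambda>c. [:c:]) f) = degree f" by (rule degree_map_poly) simp
  show "lead_coeff (map_poly (\<lambda>c. [:c:]) f) = [:lead_coeff f:]"
    by (metis (no_types, lifting) \<open>degree (map_poly (\<lambda>c. [:c:]) f) = degree f\<close> coeff_map_poly pCons_eq_0_iff)
qed

lemma Apol_deg:
  fixes f :: "'a::field poly"
  shows "degree (Apol a f) \<le> Suc (degree f)"
proof -
  have "degree (map_poly (\<lambda>c. [:c:]) f \<circ>\<^sub>p [:[:0,1:], 1:]) = degree f"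
    by (simp add: degree_pcompose Cf_props)
  moreover have "degree [:[:0,1:], [:a:]:] \<le> 1"
    by (simp add: degree_pCons_eq_if)
  ultimately show ?thesis unfolding Apol_def
    using degree_mult_le[of "[:[:0,1:], [:a:]:]" "map_poly (\<lambda>c. [:c:]) f \<circ>\<^sub>p [:[:0,1:], 1:]"]
    by linarith
qed

lemma neg_one_pow_poly: "(-1 :: 'a::comm_ring_1 poly) ^ n = [:(-1) ^ n:]"
  by (induction n) (simp_all add: mult_pCons_left)

lemma Bpol_coeff:
  fixes f :: "'a::field poly"
  assumes "f \<noteq> 0" "a \<noteq> 0"
  shows "degree (Bpol a f) = Suc (degree f) \<and>
         coeff (Bpol a f) (Suc (degree f)) = [:- a * lead_coeff f * (-1) ^ degree f:]"
proof -
  let ?G = "map_poly (\<lambda>c. [:c:]) f \<circ>\<^sub>p [:[:0,1:], -1:]"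
  have dG: "degree ?G = degree f"
    by (simp add: degree_pcompose Cf_props)
  have lG: "lead_coeff ?G = [:lead_coeff f:] * (-1) ^ degree f"
    by (subst lead_coeff_comp) (simp_all add: Cf_props coeff_map_poly)
  have G0: "?G \<noteq> 0" using lG assms(1) by auto
  have L0: "[:[:0,1:], [:-a:]:] \<noteq> 0" by simp
  have dB: "degree (Bpol a f) = Suc (degree f)"
    unfolding Bpol_def using degree_mult_eq[OF L0 G0] dG assms(2) by simp
  have "lead_coeff (Bpol a f) = [:-a:] * ([:lead_coeff f:] * (-1) ^ degree f)"
    unfolding Bpol_def lead_coeff_mult lG using assms(2) by simp
  then show ?thesis using dB by (simp add: neg_one_pow_poly mult_ac)
qed



lemma trm_0 [simp]: "trm u 0 n = 0"
  by (simp add: trm_def ev_def)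

lemma omega_act_0: "omega_act lam a 0 f = 0"
  by (simp add: omega_act_def)

lemma contains_one:
  fixes lam a :: "'a::field_char_0"
  assumes W: "omega_submodule lam a W" and f: "f \<in> W" "f \<noteq> 0"
    and lam: "lam \<noteq> 0" "inverse lam \<noteq> lam" and a: "a \<noteq> 0"
  shows "1 \<in> W"
proof -
  define k where "k = Suc (degree f)"
  define l' where "l' = inverse lam"
  have h0: "trm lam (Apol a f) n - trm l' (Bpol a f) n \<in> W" for n
  proof (cases "n = 0")
    case True
    then show ?thesis using W omega_trm[of lam a n f] omega_act_0[of lam a f]
      unfolding omega_submodule_def l'_def by auto
  next
    case False
    then have "omega_act lam a n f \<in> W" using W f unfolding omega_submodule_def by auto
    then show ?thesis using omega_trm[of lam a n f] by (simp add: l'_def)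
  qed
  have BC: "degree (Bpol a f) = k" "coeff (Bpol a f) k = [:- a * lead_coeff f * (-1) ^ degree f:]"
    using Bpol_coeff[OF f(2) a] k_def by auto
  define B1 where "B1 = (Top lam l' ^^ Suc k) (Bpol a f)"
  have kill: "(Top lam lam ^^ Suc k) (Apol a f) = 0"
    using Top_kill Apol_deg k_def by blast
  have h1: "trm lam 0 n - trm l' B1 n \<in> W" for n
    using sub_iter[OF W h0, where k=lam and j="Suc k" and n=n] kill B1_def by simp
  have B1: "degree B1 \<le> k" "coeff B1 k = smult ((l' - lam) ^ Suc k) (coeff (Bpol a f) k)"
    using Top_pres_iter[where Q="Bpol a f" and k=k and c=lam and m=l' and j="Suc k"] BC B1_def by auto
  define B2 where "B2 = (Top l' l' ^^ k) B1"
  have h2: "trm lam 0 n - trm l' B2 n \<in> W" for n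
    using sub_iter[OF W h1, where k=l' and j=k and n=n] B2_def by simp
  have l'0: "l' \<noteq> 0" using lam l'_def by simp
  obtain c where c: "c \<noteq> 0" "coeff B2 0 = smult c (coeff B1 k)"
    using Top_drop_iter[OF B1(1) l'0, where j=k] B2_def by auto
  have "trm l' B2 0 = coeff B2 0"
    by (simp add: trm_def ev_def poly_0_coeff_0)
  then have inW: "- coeff B2 0 \<in> W" using h2[of 0] by simp
  define K where "K = - (c * ((l' - lam) ^ Suc k * (- a * lead_coeff f * (-1) ^ degree f)))"
  have "- coeff B2 0 = [:K:]" using c(2) B1(2) BC(2) K_def by simp
  moreover have "K \<noteq> 0" using c(1) lam l'_def a f(2) K_def by auto
  ultimately have "smult (inverse K) (- coeff B2 0) = 1"
    by (simp add: one_pCons)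
  then show ?thesis using sub_smult[OF W inW, of "inverse K"] by simp
qed



lemma lin_comp_props:
  fixes g :: "'a::field poly"
  assumes "g \<noteq> 0"
  shows "degree ([:b,1:] * (g \<circ>\<^sub>p [:e,1:])) = Suc (degree g)"
    "coeff ([:b,1:] * (g \<circ>\<^sub>p [:e,1:])) (Suc (degree g)) = lead_coeff g"
proof -
  have d: "degree (g \<circ>\<^sub>p [:e,1:]) = degree g" by (simp add: degree_pcompose)
  have l: "lead_coeff (g \<circ>\<^sub>p [:e,1:]) = lead_coeff g" by (subst lead_coeff_comp) simp_all
  have nz: "g \<circ>\<^sub>p [:e,1:] \<noteq> 0" using l assms by auto
  have nz2: "[:b,1:] \<noteq> (0::'a poly)" by simp
  show dd: "degree ([:b,1:] * (g \<circ>\<^sub>p [:e,1:])) = Suc (degree g)"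
    using degree_mult_eq[OF nz2 nz] d by simp
  show "coeff ([:b,1:] * (g \<circ>\<^sub>p [:e,1:])) (Suc (degree g)) = lead_coeff g"
    using lead_coeff_mult[of "[:b,1:]" "g \<circ>\<^sub>p [:e,1:]"] dd l by simp
qed

lemma O1_deg:
  fixes lam a :: "'a::field"
  assumes "inverse lam \<noteq> lam" "g \<noteq> 0"
  shows "degree (omega_act lam a 1 g) = Suc (degree g)"
proof -
  let ?h1 = "[:a,1:] * (g \<circ>\<^sub>p [:1,1:])" and ?h2 = "[:-a,1:] * (g \<circ>\<^sub>p [:-1,1:])"
  have e: "omega_act lam a 1 g = smult lam ?h1 - smult (inverse lam) ?h2"
    by (simp add: omega_act_def)
  note p1 = lin_comp_props[OF assms(2), of a 1]
  note p2 = lin_comp_props[OF assms(2), of "-a" "-1"]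
  have le: "degree (omega_act lam a 1 g) \<le> Suc (degree g)"
    unfolding e by (intro degree_diff_le deg_smult_leI) (simp_all only: p1(1) p2(1) order_refl)
  have "coeff (omega_act lam a 1 g) (Suc (degree g)) = (lam - inverse lam) * lead_coeff g"
    unfolding e coeff_diff coeff_smult p1(2) p2(2) by (simp add: algebra_simps)
  moreover have "(lam - inverse lam) * lead_coeff g \<noteq> 0" using assms by auto
  ultimately have "Suc (degree g) \<le> degree (omega_act lam a 1 g)"
    by (metis le_degree)
  then show ?thesis using le by simp
qed



lemma all_degrees:
  fixes lam a :: "'a::field"
  assumes W: "omega_submodule lam a W" and one: "1 \<in> W" and lam: "inverse lam \<noteq> lam"
  shows "\<exists>g\<in>W. g \<noteq> 0 \<and> degree g = m"
proof (induction m)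
  case 0
  then show ?case using one by (intro bexI[of _ 1]) auto
next
  case (Suc m)
  then obtain g where g: "g \<in> W" "g \<noteq> 0" "degree g = m" by blast
  have "omega_act lam a 1 g \<in> W" using W g(1) unfolding omega_submodule_def by auto
  moreover have "degree (omega_act lam a 1 g) = Suc m" using O1_deg[OF lam g(2)] g(3) by simp
  ultimately show ?case by (intro bexI[of _ "omega_act lam a 1 g"]) auto
qed

lemma all_in:
  fixes lam a :: "'a::field"
  assumes W: "omega_submodule lam a W" and one: "1 \<in> W" and lam: "inverse lam \<noteq> lam"
  shows "p \<in> W"
proof (induction "degree p" arbitrary: p rule: less_induct)
  case less
  show ?case
  proof (cases "p = 0")
    case True
    then show ?thesis using W unfolding omega_submodule_def by auto
  next
    case False
    obtain g where g: "g \<in> W" "g \<noteq> 0" "degree g = degree p"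
      using all_degrees[OF W one lam] by blast
    define q where "q = p - smult (lead_coeff p / lead_coeff g) g"
    have gW: "smult (lead_coeff p / lead_coeff g) g \<in> W" using sub_smult[OF W g(1)] by blast
    have dq: "degree q \<le> degree p" unfolding q_def
      by (intro degree_diff_le deg_smult_leI) (simp_all add: g(3))
    have cq: "coeff q (degree p) = 0" unfolding q_def using g(2) by (simp add: g(3)[symmetric])
    show ?thesis
    proof (cases "q = 0")
      case True
      then show ?thesis using gW q_def by simp
    next
      case False
      have "degree q \<noteq> degree p"
      proof
        assume "degree q = degree p"
        then have "lead_coeff q = 0" using cq by simp
        then show False using False by simp
      qed
      then have "degree q < degree p" using dq by simp
      then have "q \<in> W" using less by blast
      then have "q + smult (lead_coeff p / lead_coeff g) g \<in> W"
        using gW W unfolding omega_submodule_def by blast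
      then show ?thesis by (simp add: q_def)
    qed
  qed
qed

theorem proposition3p19:
  fixes lam a :: "'a::field_char_0"
  assumes "lam \<noteq> 0" and "lam \<noteq> 1" and "lam \<noteq> -1" and "a \<noteq> 0"
  shows "omega_irreducible lam a"
proof -
  have lam: "inverse lam \<noteq> lam"
  proof
    assume h: "inverse lam = lam"
    then have "lam * lam = 1" using assms(1) by (metis right_inverse)
    then have "(lam - 1) * (lam + 1) = 0" by (simp add: algebra_simps)
    then show False using assms(2,3) by (auto simp: add_eq_0_iff2)
  qed
  have "(UNIV :: 'a poly set) \<noteq> {0}" by (metis UNIV_I one_neq_zero singletonD)
  moreover have "W = {0} \<or> W = UNIV" if W: "omega_submodule lam a W" for W
  proof (cases "W = {0}")
    case False
    then obtain f where f: "f \<in> W" "f \<noteq> 0"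
      using W unfolding omega_submodule_def by blast
    have "1 \<in> W" using contains_one[OF W f assms(1) lam assms(4)] .
    then have "W = UNIV" using all_in[OF W _ lam] by blast
    then show ?thesis by blast
  qed simp
  ultimately show ?thesis unfolding omega_irreducible_def by blast
qed

end
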